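(* Let $\kappa_3,\kappa_4$ be constants and let $y$ be a $C^3$ function on an open interval of $r>0$ on which $\kappa_3r^2+\kappa_4\neq 0$. Then $y$ satisfies the third-order equation $$(\kappa_3r^2+\kappa_4)r^3y'''+(\kappa_3r^2-2\kappa_4)r^2y''-(\kappa_3r^2+2\kappa_4)ry'+8\kappa_4y=8$$ if and only if there exists a constant $\kappa_2$ such that $y$ satisfies the second-order equation $$(\kappa_3r^2+\kappa_4)y''+\kappa_3ry'-\frac{2\kappa_4}{r^2}y+\frac{2}{r^2}=2\kappa_2r^2 .$$
   Context: Primes denote derivatives with respect to $r$. (In the paper, $y=b^2$ is the metric function of a static spherically symmetric vacuum solution of conformal Killing gravity, the second-order equation arises from the conformal Killing parametrization and the third-order one from Harada's original field equations.) *)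

theory Defs
  imports "HOL-Analysis.Analysis"
begin

end

theory Submission
  imports Defs
begin

theorem proposition7:
  fixes k3 k4 :: real and I :: "real set"
    and y y1 y2 y3 :: "real \<Rightarrow> real"
  assumes I_open: "open I" and I_int: "is_interval I" and I_ne: "I \<noteq> {}"
    and I_pos: "I \<subseteq> {0<..}"
    and nz: "\<forall>r\<in>I. k3 * r^2 + k4 \<noteq> 0"
    and d1: "\<forall>r\<in>I. (y has_real_derivative y1 r) (at r)"
    and d2: "\<forall>r\<in>I. (y1 has_real_derivative y2 r) (at r)"
    and d3: "\<forall>r\<in>I. (y2 has_real_derivative y3 r) (at r)"
    and c3: "continuous_on I y3"
  shows "(\<forall>r\<in>I. (k3 * r^2 + k4) * r^3 * y3 r + (k3 * r^2 - 2 * k4) * r^2 * y2 r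
                   - (k3 * r^2 + 2 * k4) * r * y1 r + 8 * k4 * y r = 8)
     \<longleftrightarrow> (\<exists>k2::real. \<forall>r\<in>I. (k3 * r^2 + k4) * y2 r + k3 * r * y1 r
                   - 2 * k4 / r^2 * y r + 2 / r^2 = 2 * k2 * r^2)"
proof -
  define F where "F r = (k3 * r^2 + k4) * y2 r + k3 * r * y1 r - 2 * k4 / r^2 * y r + 2 / r^2" for r
  define E where "E r = F r / r^2" for r
  define G where "G r = (k3 * r^2 + k4) * r^3 * y3 r + (k3 * r^2 - 2 * k4) * r^2 * y2 r
                   - (k3 * r^2 + 2 * k4) * r * y1 r + 8 * k4 * y r - 8" for r
  have dE: "(E has_real_derivative G r / r^5) (at r)" if r: "r \<in> I" for r
  proof -
    have rp: "r > 0" using r I_pos by auto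
    have y: "(y has_real_derivative y1 r) (at r)" "(y1 has_real_derivative y2 r) (at r)"
      "(y2 has_real_derivative y3 r) (at r)" using d1 d2 d3 r by auto
    have "(E has_real_derivative
       ((( (2*k3*r) * y2 r + (k3 * r^2 + k4) * y3 r + (k3 * y1 r + k3 * r * y2 r)
          - ((- (2*k4 * (2*r)) / (r^2)^2) * y r + 2*k4/r^2 * y1 r) + (- (2 * (2*r)) / (r^2)^2)) * r^2
          - F r * (2*r)) / (r^2)^2)) (at r)"
      unfolding E_def F_def
      apply (rule derivative_eq_intros refl y | use rp in simp)+
      done
    moreover have "((( (2*k3*r) * y2 r + (k3 * r^2 + k4) * y3 r + (k3 * y1 r + k3 * r * y2 r)
          - ((- (2*k4 * (2*r)) / (r^2)^2) * y r + 2*k4/r^2 * y1 r) + (- (2 * (2*r)) / (r^2)^2)) * r^2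
          - F r * (2*r)) / (r^2)^2) = G r / r^5"
      unfolding F_def G_def using rp by (simp add: field_simps) (simp add: algebra_simps power2_eq_square power3_eq_cube eval_nat_numeral)
    ultimately show ?thesis by simp
  qed
  show ?thesis
  proof
    assume H: "\<forall>r\<in>I. (k3 * r^2 + k4) * r^3 * y3 r + (k3 * r^2 - 2 * k4) * r^2 * y2 r
                   - (k3 * r^2 + 2 * k4) * r * y1 r + 8 * k4 * y r = 8"
    have "\<forall>x\<in>I. (E has_field_derivative 0) (at x within I)"
    proof
      fix x assume x: "x \<in> I"
      have "G x = 0" using H x unfolding G_def by auto
      then show "(E has_field_derivative 0) (at x within I)"
        using dE[OF x] by (simp add: has_field_derivative_at_within)
    qed
    then obtain c where c: "\<forall>x\<in>I. E x = c"
      using has_field_derivative_zero_constant[of I E] is_interval_convex[OF I_int] by blast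
    show "\<exists>k2::real. \<forall>r\<in>I. (k3 * r^2 + k4) * y2 r + k3 * r * y1 r
                   - 2 * k4 / r^2 * y r + 2 / r^2 = 2 * k2 * r^2"
    proof (rule exI[of _ "c/2"], intro ballI)
      fix r assume r: "r \<in> I"
      have rp: "r > 0" using r I_pos by auto
      have "F r / r^2 = c" using c r unfolding E_def by auto
      then have "F r = c * r^2" using rp by (simp add: field_simps)
      then show "(k3 * r^2 + k4) * y2 r + k3 * r * y1 r - 2 * k4 / r^2 * y r + 2 / r^2 = 2 * (c/2) * r^2"
        unfolding F_def by simp
    qed
  next
    assume "\<exists>k2::real. \<forall>r\<in>I. (k3 * r^2 + k4) * y2 r + k3 * r * y1 r
                   - 2 * k4 / r^2 * y r + 2 / r^2 = 2 * k2 * r^2"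
    then obtain k2 where k2: "\<forall>r\<in>I. F r = 2 * k2 * r^2" unfolding F_def by blast
    have Ec: "E r = 2 * k2" if "r \<in> I" for r
      using k2 that I_pos unfolding E_def by auto
    show "\<forall>r\<in>I. (k3 * r^2 + k4) * r^3 * y3 r + (k3 * r^2 - 2 * k4) * r^2 * y2 r
                   - (k3 * r^2 + 2 * k4) * r * y1 r + 8 * k4 * y r = 8"
    proof
      fix r assume r: "r \<in> I"
      have rp: "r > 0" using r I_pos by auto
      have "((\<lambda>_. 2 * k2) has_real_derivative 0) (at r)" by simp
      then have "(E has_real_derivative 0) (at r)"
        apply (rule has_field_derivative_transform_within_open[where S=I])
        using I_open r Ec by auto
      then have "G r / r^5 = 0" using dE[OF r] DERIV_unique by blast
      then have "G r = 0" using rp by simp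
      then show "(k3 * r^2 + k4) * r^3 * y3 r + (k3 * r^2 - 2 * k4) * r^2 * y2 r
                   - (k3 * r^2 + 2 * k4) * r * y1 r + 8 * k4 * y r = 8"
        unfolding G_def by simp
    qed
  qed
qed

end
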